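(* Let $\mathcal{H}$ be a real $m^{\rm th}$-order $n$-dimensional strong Hankel tensor ($m\ge2$, $m(n-1)$ even). Then $\mathcal{H}$ has no negative H-eigenvalues.
   Context: The Hankel tensor generated by ${\bf h}=(h_0,\dots,h_{m(n-1)})\in\mathbb{R}^{m(n-1)+1}$ has entries $\mathcal{H}_{i_1\dots i_m}=h_{i_1+\dots+i_m}$, $0\le i_j\le n-1$; its associated Hankel matrix is $H$ with $H_{ij}=h_{i+j}$, $0\le i,j\le m(n-1)/2$; $\mathcal{H}$ is a strong Hankel tensor if $H$ is positive semi-definite. A real $\lambda$ is an H-eigenvalue of $\mathcal{H}$ if there is nonzero ${\bf x}\in\mathbb{R}^n$ with $\mathcal{H}{\bf x}^{m-1}=\lambda{\bf x}^{[m-1]}$, where $(\mathcal{H}{\bf x}^{m-1})_i=\sum_{i_2,\dots,i_m}\mathcal{H}_{i i_2\dots i_m}x_{i_2}\cdots x_{i_m}$ and ${\bf x}^{[m-1]}=(x_1^{m-1},\dots,x_n^{m-1})^\top$. *)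

theory Defs
  imports Complex_Main "HOL-Library.FuncSet"
begin

text \<open>A Hankel tensor of order m and dimension n is given by its generating vector
  h = (h_0, ..., h_{m(n-1)}), modelled as a function h :: nat => real (only the values
  h_0 .. h_{m(n-1)} are ever used). Indices run over 0..n-1.\<close>

definition hankel_tensor :: "(nat \<Rightarrow> real) \<Rightarrow> nat list \<Rightarrow> real" where
  "hankel_tensor h is = h (sum_list is)"

definition hankel_matrix :: "(nat \<Rightarrow> real) \<Rightarrow> nat \<Rightarrow> nat \<Rightarrow> real" where
  "hankel_matrix h i j = h (i + j)"

definition psd :: "nat \<Rightarrow> (nat \<Rightarrow> nat \<Rightarrow> real) \<Rightarrow> bool" where
  "psd N A \<longleftrightarrow> (\<forall>y :: nat \<Rightarrow> real.
      (\<Sum>i<N. \<Sum>j<N. A i j * y i * y j) \<ge> 0)"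

definition strong_hankel :: "nat \<Rightarrow> nat \<Rightarrow> (nat \<Rightarrow> real) \<Rightarrow> bool" where
  "strong_hankel m n h \<longleftrightarrow> psd (m * (n - 1) div 2 + 1) (hankel_matrix h)"

definition hankel_apply :: "nat \<Rightarrow> nat \<Rightarrow> (nat \<Rightarrow> real) \<Rightarrow> (nat \<Rightarrow> real) \<Rightarrow> nat \<Rightarrow> real" where
  "hankel_apply m n h x i =
     (\<Sum>f \<in> {..<m-1} \<rightarrow>\<^sub>E {..<n}.
        hankel_tensor h (i # map f [0..<m-1]) * (\<Prod>k<m-1. x (f k)))"

definition H_eigenvalue :: "nat \<Rightarrow> nat \<Rightarrow> (nat \<Rightarrow> real) \<Rightarrow> real \<Rightarrow> bool" where
  "H_eigenvalue m n h lam \<longleftrightarrow>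
     (\<exists>x :: nat \<Rightarrow> real. (\<exists>i<n. x i \<noteq> 0) \<and>
        (\<forall>i<n. hankel_apply m n h x i = lam * x i ^ (m - 1)))"

end

theory Submission imports Defs "HOL-Computational_Algebra.Polynomial" begin

definition LL :: "(nat\<Rightarrow>real) \<Rightarrow> nat \<Rightarrow> real poly \<Rightarrow> real" where
  "LL h M P = (\<Sum>e<M. h e * coeff P e)"

lemma LL_sum: "LL h M (\<Sum>i\<in>A. f i) = (\<Sum>i\<in>A. LL h M (f i))"
  unfolding LL_def by (simp add: coeff_sum sum_distrib_left sum.swap[of _ A])

lemma LL_smult: "LL h M (smult c P) = c * LL h M P"
  unfolding LL_def by (simp add: sum_distrib_left algebra_simps)

lemma LL_monom: "LL h M (monom c e) = (if e < M then h e * c else 0)"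
  unfolding LL_def by (simp add: coeff_monom if_distrib sum.If_cases cong: if_cong)

lemma prod_monom: "finite A \<Longrightarrow> (\<Prod>j\<in>A. monom (c j) (e j)) = monom (\<Prod>j\<in>A. c j) (\<Sum>j\<in>A. e j)"
  by (induction A rule: finite_induct) (auto simp: mult_monom monom_0 one_pCons)

lemma pow_expand:
  "(\<Sum>a<n. monom (x a) a) ^ k = (\<Sum>f\<in>{..<k}\<rightarrow>\<^sub>E{..<n}. monom (\<Prod>j<k. x (f j)) (\<Sum>j<k. f j))"
proof -
  have "(\<Sum>a<n. monom (x a) a) ^ k = (\<Prod>j<k. \<Sum>a<n. monom (x a) a)" by simp
  also have "\<dots> = (\<Sum>f\<in>{..<k}\<rightarrow>\<^sub>E{..<n}. \<Prod>j<k. monom (x (f j)) (f j))"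
    by (rule prod_sum_PiE) auto
  also have "\<dots> = (\<Sum>f\<in>{..<k}\<rightarrow>\<^sub>E{..<n}. monom (\<Prod>j<k. x (f j)) (\<Sum>j<k. f j))"
    by (simp add: prod_monom)
  finally show ?thesis .
qed

lemma sl_map: "sum_list (map (f::nat\<Rightarrow>nat) [0..<k]) = (\<Sum>j<k. f j)"
  by (induction k) auto

lemma apply_LL:
  assumes "m \<ge> 1" "i < n" "M > m * (n - 1)"
  shows "hankel_apply m n h x i = LL h M (monom 1 i * (\<Sum>a<n. monom (x a) a) ^ (m - 1))"
proof -
  have "monom 1 i * (\<Sum>a<n. monom (x a) a) ^ (m - 1) =
      (\<Sum>f\<in>{..<m-1}\<rightarrow>\<^sub>E{..<n}. monom (\<Prod>j<m-1. x (f j)) (i + (\<Sum>j<m-1. f j)))"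
    by (simp add: pow_expand sum_distrib_left mult_monom)
  hence "LL h M (monom 1 i * (\<Sum>a<n. monom (x a) a) ^ (m - 1)) =
      (\<Sum>f\<in>{..<m-1}\<rightarrow>\<^sub>E{..<n}. (if i + (\<Sum>j<m-1. f j) < M then h (i + (\<Sum>j<m-1. f j)) * (\<Prod>j<m-1. x (f j)) else 0))"
    by (simp only: LL_sum LL_monom)
  also have "\<dots> = (\<Sum>f\<in>{..<m-1}\<rightarrow>\<^sub>E{..<n}. h (i + (\<Sum>j<m-1. f j)) * (\<Prod>j<m-1. x (f j)))"
  proof (rule sum.cong[OF refl])
    fix f assume f: "f \<in> {..<m-1}\<rightarrow>\<^sub>E{..<n}"
    have "(\<Sum>j<m-1. f j) \<le> card {..<m-1} * (n - 1)"
    proof -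
      have "\<And>j. j \<in> {..<m-1} \<Longrightarrow> f j \<le> n - 1" proof -
        fix j assume "j \<in> {..<m-1}"
        hence "f j \<in> {..<n}" using f by (simp add: PiE_iff)
        thus "f j \<le> n - 1" by simp
      qed
      from sum_bounded_above[of "{..<m-1}" f "n-1", OF this] show ?thesis by simp
    qed
    hence "(\<Sum>j<m-1. f j) \<le> (m-1) * (n-1)" by simp
    moreover have "(m-1)*(n-1) + (n-1) = m * (n-1)" using assms(1)
      by (cases m) auto
    ultimately have "i + (\<Sum>j<m-1. f j) < M" using assms by linarith
    thus "(if i + (\<Sum>j<m-1. f j) < M then h (i + (\<Sum>j<m-1. f j)) * (\<Prod>j<m-1. x (f j)) else 0)
       = h (i + (\<Sum>j<m-1. f j)) * (\<Prod>j<m-1. x (f j))" by simp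
  qed
  also have "\<dots> = hankel_apply m n h x i"
    unfolding hankel_apply_def hankel_tensor_def
    by (simp add: sl_map)
  finally show ?thesis by simp
qed

lemma LL_square:
  assumes "degree q < N" "2*(N-1) < M"
  shows "LL h M (q*q) = (\<Sum>a<N. \<Sum>b<N. hankel_matrix h a b * coeff q a * coeff q b)"
proof -
  have N: "{..N-1} = {..<N}" using assms(1) by auto
  have qs: "q = (\<Sum>a<N. monom (coeff q a) a)"
    using poly_as_sum_of_monoms'[of q "N-1"] assms(1) N by simp
  have "q*q = (\<Sum>a<N. \<Sum>b<N. monom (coeff q a * coeff q b) (a+b))"
    by (subst (1 2) qs) (simp add: sum_product mult_monom)
  hence "LL h M (q*q) = (\<Sum>a<N. \<Sum>b<N. if a+b<M then h (a+b) * (coeff q a * coeff q b) else 0)"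
    by (simp only: LL_sum LL_monom)
  also have "\<dots> = (\<Sum>a<N. \<Sum>b<N. hankel_matrix h a b * coeff q a * coeff q b)"
    by (intro sum.cong refl) (use assms(2) in \<open>auto simp: hankel_matrix_def\<close>)
  finally show ?thesis .
qed

lemma weighted:
  "(\<Sum>i<n. w i * LL h M (monom 1 i * P)) = LL h M ((\<Sum>i<n. monom (w i) i) * P)"
proof -
  have "(\<Sum>i<n. monom (w i) i) * P = (\<Sum>i<n. smult (w i) (monom 1 i * P))"
  proof -
    have "\<And>i. monom (w i) i * P = smult (w i) (monom 1 i * P)"
      by (metis mult_smult_left smult_monom mult.right_neutral)
    thus ?thesis by (simp add: sum_distrib_right)
  qed
  thus ?thesis by (simp add: LL_sum LL_smult)
qed

theorem corollary1:
  fixes m n :: nat and h :: "nat \<Rightarrow> real"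
  assumes "m \<ge> 2" and "even (m * (n - 1))"
    and "strong_hankel m n h"
  shows "\<not> (\<exists>lam. lam < 0 \<and> H_eigenvalue m n h lam)"
proof
  assume "\<exists>lam. lam < 0 \<and> H_eigenvalue m n h lam"
  then obtain lam x i0 where lam: "lam < 0" and i0: "i0 < n" "x i0 \<noteq> 0"
    and eig: "\<forall>i<n. hankel_apply m n h x i = lam * x i ^ (m-1)"
    unfolding H_eigenvalue_def by blast
  define N where "N = m*(n-1) div 2 + 1"
  define M where "M = m*(n-1) + 1"
  define p where "p = (\<Sum>a<n. monom (x a) a)"
  have degp: "degree p \<le> n - 1" unfolding p_def
    by (intro degree_sum_le) (auto intro: order_trans[OF degree_monom_le])
  have key: "\<exists>w q. (\<forall>i<n. 0 \<le> w i * x i^(m-1)) \<and> 0 < w i0 * x i0^(m-1) \<and> degree q < N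
     \<and> (\<Sum>i<n. monom (w i) i) * p^(m-1) = q*q"
  proof (cases "even m")
    case True
    then obtain k where k: "m = 2*k" by blast
    have "N - 1 = k*(n-1)" unfolding N_def k by simp
    have dq: "degree (p^k) < N"
    proof -
      have "degree (p^k) \<le> k * degree p" using degree_power_le[of p k] by (simp add: mult.commute)
      also have "\<dots> \<le> k*(n-1)" using degp by simp
      finally show ?thesis unfolding N_def k by simp
    qed
    have eq: "p * p^(m-1) = p^k * p^k"
    proof -
      have "p * p^(m-1) = p^m" using assms(1) by (simp flip: power_Suc)
      also have "\<dots> = p^k * p^k" by (simp add: k mult_2 power_add)
      finally show ?thesis .
    qed
    have xm: "x i * x i^(m-1) = (x i ^ 2)^k" for i
    proof -
      have "x i * x i^(m-1) = x i ^ m" using assms(1) by (simp flip: power_Suc)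
      thus ?thesis by (simp add: k power_mult)
    qed
    have pos: "\<And>i. 0 \<le> x i * x i^(m-1)" unfolding xm by simp
    have pos2: "0 < x i0 * x i0^(m-1)" using i0 unfolding xm by simp
    show ?thesis
      by (rule exI[of _ x], rule exI[of _ "p^k"]) (use pos pos2 dq eq in \<open>simp add: p_def\<close>)
  next
    case False
    then obtain k where k: "m = 2*k+1" using oddE by blast
    have "even (n-1)" using assms(2) False by simp
    then obtain r where r: "n - 1 = 2*r" by blast
    define s where "s = (\<Sum>a\<le>r. monom (1::real) a)"
    have degs: "degree s \<le> r" unfolding s_def
      by (intro degree_sum_le) (auto intro: order_trans[OF degree_monom_le])
    have cs: "\<And>j. coeff s j = (if j \<le> r then 1 else 0)"
      unfolding s_def by (simp add: coeff_sum coeff_monom)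
    define w where "w i = coeff (s*s) i" for i
    have degss: "degree (s*s) \<le> n - 1"
      using degree_mult_le[of s s] degs r by simp
    have W: "(\<Sum>i<n. monom (w i) i) = s*s"
    proof -
      have "{..n-1} = {..<n}" using i0 by auto
      thus ?thesis using poly_as_sum_of_monoms'[OF degss] unfolding w_def by simp
    qed
    have wpos: "w i > 0" if "i < n" for i
    proof -
      define j0 where "j0 = min i r"
      have "w i = (\<Sum>j\<le>i. coeff s j * coeff s (i-j))" unfolding w_def by (simp add: coeff_mult)
      also have "\<dots> \<ge> coeff s j0 * coeff s (i-j0)"
        by (rule member_le_sum) (auto simp: cs j0_def)
      also have "coeff s j0 * coeff s (i-j0) = 1" using that r by (auto simp: cs j0_def)
      finally show ?thesis by simp
    qed
    have xp: "\<And>i. x i ^ (m-1) = (x i ^ 2) ^ k" using k by (simp add: power_mult)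
    have eq: "s*s * p^(m-1) = (s*p^k) * (s*p^k)"
    proof -
      have "p^(m-1) = p^k * p^k" by (simp add: k mult_2 power_add)
      thus ?thesis by (simp add: algebra_simps)
    qed
    have dq: "degree (s*p^k) < N"
    proof -
      have "degree (s*p^k) \<le> degree s + degree (p^k)" by (rule degree_mult_le)
      also have "\<dots> \<le> r + k * (n-1)" 
      proof -
        have "degree (p^k) \<le> degree p * k" by (rule degree_power_le)
        also have "\<dots> \<le> (n-1) * k" using degp by simp
        finally show ?thesis using degs by (simp add: mult.commute)
      qed
      also have "\<dots> = N - 1" unfolding N_def k r by simp
      finally show ?thesis unfolding N_def by simp
    qed
    show ?thesis
    proof (rule exI[of _ w], rule exI[of _ "s*p^k"], intro conjI allI impI)
      fix i assume "i < n" thus "0 \<le> w i * x i^(m-1)" using wpos[of i] xp[of i] by simp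
    next
      show "0 < w i0 * x i0^(m-1)" using wpos[OF i0(1)] xp[of i0] i0 by simp
    qed (use dq eq W in auto)
  qed
  then obtain w q where w1: "\<forall>i<n. 0 \<le> w i * x i^(m-1)" and w2: "0 < w i0 * x i0^(m-1)"
    and dq: "degree q < N" and eq: "(\<Sum>i<n. monom (w i) i) * p^(m-1) = q*q" by blast
  have MN: "2*(N-1) < M" unfolding N_def M_def by simp
  have "(\<Sum>i<n. w i * hankel_apply m n h x i) = (\<Sum>i<n. w i * LL h M (monom 1 i * p^(m-1)))"
    using apply_LL[of m _ n M h x] assms(1) unfolding M_def p_def by simp
  also have "\<dots> = LL h M (q*q)" unfolding weighted eq ..
  also have "\<dots> = (\<Sum>a<N. \<Sum>b<N. hankel_matrix h a b * coeff q a * coeff q b)"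
    by (rule LL_square[OF dq MN])
  also have "\<dots> \<ge> 0" using assms(3) unfolding strong_hankel_def psd_def N_def by blast
  finally have ge: "(\<Sum>i<n. w i * hankel_apply m n h x i) \<ge> 0" .
  have "(\<Sum>i<n. w i * hankel_apply m n h x i) = lam * (\<Sum>i<n. w i * x i^(m-1))"
    using eig by (simp add: sum_distrib_left algebra_simps)
  also have "\<dots> < 0"
  proof (rule mult_neg_pos[OF lam])
    show "0 < (\<Sum>i<n. w i * x i^(m-1))"
      by (rule sum_pos2[of _ i0]) (use w1 w2 i0 in auto)
  qed
  finally show False using ge by simp
qed

end
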